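(* Suppose $T$ has geometric elimination of imaginaries. For each $e\in\mathbb M^{eq}$ choose a geometric canonical parameter $g(e)$ for $e$, with $g(a)=a$ for real $a\in\mathbb M$, and for $A\subset\mathbb M^{eq}$ put $g(A)=\bigcup\{g(e):e\in A\}$. Then: (a) for all $A,B,C\subset\mathbb M^{eq}$, $A\mathop{\downarrow}^a_C B$ holds in $\mathbb M^{eq}$ if and only if $g(A)\mathop{\downarrow}^a_{g(C)}g(B)$ holds in $\mathbb M$; (b) $T$ is modular if and only if $T^{eq}$ is modular.
   Context: A geometric canonical parameter for $e\in\mathbb M^{eq}$ is a finite real tuple $c$ with $c\in\operatorname{acl}^{eq}(e)$ and $e\in\operatorname{acl}^{eq}(c)$; $T$ has geometric elimination of imaginaries if every imaginary has one. In $\mathbb M$: $A\mathop{\downarrow}^a_C B$ iff $\operatorname{acl}(AC)\cap\operatorname{acl}(BC)=\operatorname{acl}(C)$; in $\mathbb M^{eq}$ the same with $\operatorname{acl}^{eq}$. $T$ (resp. $T^{eq}$) is modular if $\mathop{\downarrow}^a$ in $\mathbb M$ (resp. $\mathbb M^{eq}$) satisfies base monotonicity: for $D\subseteq C\subseteq B$, $A\mathop{\downarrow}^a_D B$ implies $A\mathop{\downarrow}^a_C B$. *)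

theory Defs
  imports Main
begin

text \<open>Abstract rendering of the setting.  The type 'e is the universe of the
monster model M^eq, the set M :: 'e set is its home (real) sort, acleq is
acl^eq on M^eq and acl is acl on M.\<close>

definition closure_op :: "('e set \<Rightarrow> 'e set) \<Rightarrow> bool" where
  "closure_op cl \<longleftrightarrow>
     (\<forall>A. A \<subseteq> cl A) \<and> (\<forall>A B. A \<subseteq> B \<longrightarrow> cl A \<subseteq> cl B) \<and> (\<forall>A. cl (cl A) = cl A)"

definition a_indep :: "('e set \<Rightarrow> 'e set) \<Rightarrow> 'e set \<Rightarrow> 'e set \<Rightarrow> 'e set \<Rightarrow> bool" where
  "a_indep cl A C B \<longleftrightarrow> cl (A \<union> C) \<inter> cl (B \<union> C) = cl C"

definition modular_on :: "('e set \<Rightarrow> 'e set) \<Rightarrow> 'e set \<Rightarrow> bool" where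
  "modular_on cl U \<longleftrightarrow>
     (\<forall>A B C D. A \<subseteq> U \<longrightarrow> B \<subseteq> U \<longrightarrow> C \<subseteq> U \<longrightarrow> D \<subseteq> U \<longrightarrow>
        D \<subseteq> C \<longrightarrow> C \<subseteq> B \<longrightarrow> a_indep cl A D B \<longrightarrow> a_indep cl A C B)"

text \<open>g is a geometric canonical parameter choice: g e is a finite real tuple
(finite subset of M) interalgebraic with e, and g a = a for real a.\<close>
definition geom_canonical_choice ::
  "'e set \<Rightarrow> ('e set \<Rightarrow> 'e set) \<Rightarrow> ('e \<Rightarrow> 'e set) \<Rightarrow> bool" where
  "geom_canonical_choice M acleq g \<longleftrightarrow>
     (\<forall>e. finite (g e) \<and> g e \<subseteq> M \<and> g e \<subseteq> acleq {e} \<and> e \<in> acleq (g e)) \<and>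
     (\<forall>a\<in>M. g a = {a})"

definition gimg :: "('e \<Rightarrow> 'e set) \<Rightarrow> 'e set \<Rightarrow> 'e set" where
  "gimg g A = \<Union> (g ` A)"

end

theory Submission
  imports Defs
begin

lemma gimg_sub: "geom_canonical_choice M acleq g \<Longrightarrow> gimg g A \<subseteq> M"
  unfolding geom_canonical_choice_def gimg_def by blast

lemma gimg_Un: "gimg g (A \<union> B) = gimg g A \<union> gimg g B"
  unfolding gimg_def by blast

lemma gimg_mono: "A \<subseteq> B \<Longrightarrow> gimg g A \<subseteq> gimg g B"
  unfolding gimg_def by blast

lemma gimg_real: "geom_canonical_choice M acleq g \<Longrightarrow> A \<subseteq> M \<Longrightarrow> gimg g A = A"
proof -
  assume g: "geom_canonical_choice M acleq g" and A: "A \<subseteq> M"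
  have "\<And>a. a \<in> A \<Longrightarrow> g a = {a}" using g A unfolding geom_canonical_choice_def by blast
  hence "g ` A = (\<lambda>a. {a}) ` A" by (simp cong: image_cong)
  thus ?thesis unfolding gimg_def by auto
qed

lemma acl_gimg:
  assumes c: "closure_op acleq" and g: "geom_canonical_choice M acleq g"
  shows "acleq (gimg g A) = acleq A"
proof -
  have inc: "\<And>A. A \<subseteq> acleq A" and mono: "\<And>A B. A \<subseteq> B \<Longrightarrow> acleq A \<subseteq> acleq B"
    and idem: "\<And>A. acleq (acleq A) = acleq A" using c unfolding closure_op_def by blast+
  have "gimg g A \<subseteq> acleq A"
  proof
    fix x assume "x \<in> gimg g A"
    then obtain e where e: "e \<in> A" "x \<in> g e" unfolding gimg_def by blast
    then have "x \<in> acleq {e}" using g unfolding geom_canonical_choice_def by blast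
    moreover have "acleq {e} \<subseteq> acleq A" using e mono by blast
    ultimately show "x \<in> acleq A" by blast
  qed
  hence 1: "acleq (gimg g A) \<subseteq> acleq A" using mono[of "gimg g A" "acleq A"] idem[of A] by simp
  have "A \<subseteq> acleq (gimg g A)"
  proof
    fix e assume e: "e \<in> A"
    have "e \<in> acleq (g e)" using g unfolding geom_canonical_choice_def by blast
    moreover have "g e \<subseteq> gimg g A" using e unfolding gimg_def by blast
    ultimately show "e \<in> acleq (gimg g A)" using mono by blast
  qed
  hence "acleq A \<subseteq> acleq (gimg g A)" using mono[of A "acleq (gimg g A)"] idem[of "gimg g A"] by simp
  with 1 show ?thesis by blast
qed

lemma trans_sym_helper: "(P::bool) = Q \<Longrightarrow> Q = R \<Longrightarrow> R = P"
  by simp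

lemma part_a:
  assumes c: "closure_op acleq" and acl: "\<And>A. A \<subseteq> M \<Longrightarrow> acl A = acleq A \<inter> M"
    and g: "geom_canonical_choice M acleq g"
  shows "a_indep acleq A C B \<longleftrightarrow> a_indep acl (gimg g A) (gimg g C) (gimg g B)"
proof -
  have mono: "\<And>A B. A \<subseteq> B \<Longrightarrow> acleq A \<subseteq> acleq B"
    and idem: "\<And>A. acleq (acleq A) = acleq A" using c unfolding closure_op_def by blast+
  have key: "\<And>X. acl (gimg g X) = acleq X \<inter> M"
  proof -
    fix X
    have "acl (gimg g X) = acleq (gimg g X) \<inter> M" by (rule acl[OF gimg_sub[OF g]])
    thus "acl (gimg g X) = acleq X \<inter> M" by (simp only: acl_gimg[OF c g])
  qed
  have eq: "a_indep acl (gimg g A) (gimg g C) (gimg g B) \<longleftrightarrow>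
      acleq (A \<union> C) \<inter> acleq (B \<union> C) \<inter> M = acleq C \<inter> M"
    unfolding a_indep_def gimg_Un[symmetric] key by blast
  have "acleq C \<subseteq> acleq (A \<union> C)" "acleq C \<subseteq> acleq (B \<union> C)" using mono[of C "A \<union> C"] mono[of C "B \<union> C"] by auto
  moreover have "acleq (A \<union> C) \<inter> acleq (B \<union> C) \<inter> M = acleq C \<inter> M \<Longrightarrow>
      acleq (A \<union> C) \<inter> acleq (B \<union> C) \<subseteq> acleq C"
  proof (intro subsetI)
    fix e assume h: "acleq (A \<union> C) \<inter> acleq (B \<union> C) \<inter> M = acleq C \<inter> M"
      and e: "e \<in> acleq (A \<union> C) \<inter> acleq (B \<union> C)"
    have ge: "g e \<subseteq> acleq {e}" "g e \<subseteq> M" "e \<in> acleq (g e)"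
      using g unfolding geom_canonical_choice_def by blast+
    have "acleq {e} \<subseteq> acleq (A \<union> C)" "acleq {e} \<subseteq> acleq (B \<union> C)"
      using e mono[of "{e}" "acleq (A \<union> C)"] mono[of "{e}" "acleq (B \<union> C)"]
        idem[of "A \<union> C"] idem[of "B \<union> C"] by simp_all
    hence "g e \<subseteq> acleq C" using ge h by blast
    hence "acleq (g e) \<subseteq> acleq C" using mono[of "g e" "acleq C"] idem[of C] by simp
    thus "e \<in> acleq C" using ge by blast
  qed
  ultimately have r: "acleq (A \<union> C) \<inter> acleq (B \<union> C) \<inter> M = acleq C \<inter> M
      \<longleftrightarrow> acleq (A \<union> C) \<inter> acleq (B \<union> C) = acleq C"
    by (intro iffI equalityI) (simp_all add: le_infI)
  show ?thesis using eq r unfolding a_indep_def by (rule trans_sym_helper)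
qed

theorem lemma7p11:
  fixes M :: "'e set" and acleq acl :: "'e set \<Rightarrow> 'e set" and g :: "'e \<Rightarrow> 'e set"
  assumes "closure_op acleq"
    and "\<And>A. A \<subseteq> M \<Longrightarrow> acl A = acleq A \<inter> M"
    and "geom_canonical_choice M acleq g"
  shows "(\<forall>A B C. a_indep acleq A C B \<longleftrightarrow> a_indep acl (gimg g A) (gimg g C) (gimg g B))
         \<and> (modular_on acl M \<longleftrightarrow> modular_on acleq UNIV)"
proof -
  note pa = part_a[OF assms]
  have b1: "modular_on acl M \<Longrightarrow> modular_on acleq UNIV"
    unfolding modular_on_def
  proof (intro allI impI)
    fix A B C D :: "'e set"
    assume m: "\<forall>A B C D. A \<subseteq> M \<longrightarrow> B \<subseteq> M \<longrightarrow> C \<subseteq> M \<longrightarrow> D \<subseteq> M \<longrightarrow>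
        D \<subseteq> C \<longrightarrow> C \<subseteq> B \<longrightarrow> a_indep acl A D B \<longrightarrow> a_indep acl A C B"
      and h: "D \<subseteq> C" "C \<subseteq> B" "a_indep acleq A D B"
    show "a_indep acleq A C B"
      using m[rule_format, of "gimg g A" "gimg g B" "gimg g C" "gimg g D"]
        gimg_sub[OF assms(3)] gimg_mono[OF h(1)] gimg_mono[OF h(2)] h(3) pa[of A D B] pa[of A C B] by simp
  qed
  have b2: "modular_on acleq UNIV \<Longrightarrow> modular_on acl M"
    unfolding modular_on_def
  proof (intro allI impI)
    fix A B C D :: "'e set"
    assume m: "\<forall>A B C D. A \<subseteq> UNIV \<longrightarrow> B \<subseteq> UNIV \<longrightarrow> C \<subseteq> UNIV \<longrightarrow> D \<subseteq> UNIV \<longrightarrow>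
        D \<subseteq> C \<longrightarrow> C \<subseteq> B \<longrightarrow> a_indep acleq A D B \<longrightarrow> a_indep acleq A C B"
      and h: "A \<subseteq> M" "B \<subseteq> M" "C \<subseteq> M" "D \<subseteq> M" "D \<subseteq> C" "C \<subseteq> B" "a_indep acl A D B"
    have r: "\<And>X. X \<subseteq> M \<Longrightarrow> gimg g X = X" using gimg_real[OF assms(3)] by blast
    have "a_indep acleq A D B" using pa[of A D B] h r by simp
    hence "a_indep acleq A C B" using m[rule_format, of A B C D] h by simp
    thus "a_indep acl A C B" using pa[of A C B] h r by simp
  qed
  show ?thesis using pa b1 b2 by (intro conjI allI iffI) auto
qed

end
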